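(* Assume the setting described in the context. Then $(L-1)\mathfrak m=0$ if and only if for all $\theta,\vartheta\in\mathbb R^{\mathfrak d}$ and $\lambda\in[0,1]$ it holds that $\mathcal L_\infty(\lambda\theta+(1-\lambda)\vartheta)\le\lambda\mathcal L_\infty(\theta)+(1-\lambda)\mathcal L_\infty(\vartheta)$.
   Context: Setting. Let $L,\mathfrak d\in\mathbb N=\{1,2,\dots\}$, $(\ell_k)_{k\in\mathbb N_0}\subseteq\mathbb N$, $a\in\mathbb R$, $b\in(a,\infty)$ with $\mathfrak d=\sum_{k=1}^L\ell_k(\ell_{k-1}+1)$; let $\mathbf d_k=\sum_{h=1}^k\ell_h(\ell_{h-1}+1)$ for $k\in\mathbb N_0$. For $\theta=(\theta_1,\dots,\theta_{\mathfrak d})\in\mathbb R^{\mathfrak d}$, $k\in\{1,\dots,L\}$, $i\in\{1,\dots,\ell_k\}$, $j\in\{1,\dots,\ell_{k-1}\}$ let $\mathfrak w^{k,\theta}_{i,j}=\theta_{(i-1)\ell_{k-1}+j+\mathbf d_{k-1}}$ and $\mathfrak b^{k,\theta}_i=\theta_{\ell_k\ell_{k-1}+i+\mathbf d_{k-1}}$, let $\mathfrak w^{k,\theta}=(\mathfrak w^{k,\theta}_{i,j})_{i,j}\in\mathbb R^{\ell_k\times\ell_{k-1}}$, $\mathfrak b^{k,\theta}=(\mathfrak b^{k,\theta}_1,\dots,\mathfrak b^{k,\theta}_{\ell_k})\in\mathbb R^{\ell_k}$, and $\mathcal A^\theta_k(x)=\mathfrak b^{k,\theta}+\mathfrak w^{k,\theta}x$.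 Let $\mathfrak M_\infty(x_1,\dots,x_n)=(\max\{x_1,0\},\dots,\max\{x_n,0\})$ and $\|\cdot\|$ the Euclidean norm. Define $\mathcal N^{k,\theta}_\infty\colon\mathbb R^{\ell_0}\to\mathbb R^{\ell_k}$, $k\in\{1,\dots,L\}$, by $\mathcal N^{1,\theta}_\infty=\mathcal A^\theta_1$ and $\mathcal N^{k+1,\theta}_\infty(x)=\mathcal A^\theta_{k+1}(\mathfrak M_\infty(\mathcal N^{k,\theta}_\infty(x)))$. Let $\mu$ be a measure on the Borel $\sigma$-algebra of $[a,b]^{\ell_0}$ with $\mathfrak m=\mu([a,b]^{\ell_0})\in\mathbb R$, let $f\colon[a,b]^{\ell_0}\to\mathbb R^{\ell_L}$ be measurable, and let $\mathcal L_\infty\colon\mathbb R^{\mathfrak d}\to\mathbb R$, $\mathcal L_\infty(\theta)=\int_{[a,b]^{\ell_0}}\|\mathcal N^{L,\theta}_\infty(x)-f(x)\|^2\,\mu(dx)$ (these integrals are real numbers as part of the setting). *)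

theory Defs
  imports "HOL-Analysis.Analysis" "HOL-Probability.Probability"
begin

text \<open>Vectors in R^n are represented as functions nat => real, using the
  coordinates 1..n; parameter vectors theta in R^d likewise (coordinates 1..d).\<close>

definition dsum :: "(nat \<Rightarrow> nat) \<Rightarrow> nat \<Rightarrow> nat" where
  "dsum l k = (\<Sum>h\<in>{1..k}. l h * (l (h - 1) + 1))"

definition weight :: "(nat \<Rightarrow> nat) \<Rightarrow> nat \<Rightarrow> (nat \<Rightarrow> real) \<Rightarrow> nat \<Rightarrow> nat \<Rightarrow> real" where
  "weight l k \<theta> i j = \<theta> ((i - 1) * l (k - 1) + j + dsum l (k - 1))"

definition bias :: "(nat \<Rightarrow> nat) \<Rightarrow> nat \<Rightarrow> (nat \<Rightarrow> real) \<Rightarrow> nat \<Rightarrow> real" where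
  "bias l k \<theta> i = \<theta> (l k * l (k - 1) + i + dsum l (k - 1))"

definition affine :: "(nat \<Rightarrow> nat) \<Rightarrow> nat \<Rightarrow> (nat \<Rightarrow> real) \<Rightarrow> (nat \<Rightarrow> real) \<Rightarrow> (nat \<Rightarrow> real)" where
  "affine l k \<theta> y = (\<lambda>i. bias l k \<theta> i + (\<Sum>j\<in>{1..l (k - 1)}. weight l k \<theta> i j * y j))"

definition relu :: "(nat \<Rightarrow> real) \<Rightarrow> (nat \<Rightarrow> real)" where
  "relu y = (\<lambda>i. max (y i) 0)"

text \<open>realization N^{k,theta}; the case k = 0 is a dummy (only k >= 1 is used).\<close>
primrec realization :: "(nat \<Rightarrow> nat) \<Rightarrow> nat \<Rightarrow> (nat \<Rightarrow> real) \<Rightarrow> (nat \<Rightarrow> real) \<Rightarrow> (nat \<Rightarrow> real)" where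
  "realization l 0 \<theta> x = x"
| "realization l (Suc k) \<theta> x =
     affine l (Suc k) \<theta> (if k = 0 then x else relu (realization l k \<theta> x))"

definition risk :: "(nat \<Rightarrow> nat) \<Rightarrow> nat \<Rightarrow> (nat \<Rightarrow> real) measure \<Rightarrow> ((nat \<Rightarrow> real) \<Rightarrow> (nat \<Rightarrow> real))
     \<Rightarrow> (nat \<Rightarrow> real) \<Rightarrow> real" where
  "risk l L \<mu> f \<theta> =
     (\<integral>x. (\<Sum>i\<in>{1..l L}. (realization l L \<theta> x i - f x i)\<^sup>2) \<partial>\<mu>)"

end

theory Submission
  imports Defs
begin

lemma sq_convex:
  fixes t p q c :: real
  assumes "0 \<le> t" "t \<le> 1"
  shows "(t*p + (1-t)*q - c)^2 \<le> t*(p-c)^2 + (1-t)*(q-c)^2"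
proof -
  have "t*(p-c)^2 + (1-t)*(q-c)^2 - (t*p + (1-t)*q - c)^2 = t*(1-t)*(p-q)^2"
    by (simp add: power2_eq_square algebra_simps)
  moreover have "t*(1-t)*(p-q)^2 \<ge> 0" using assms by simp
  ultimately show ?thesis by linarith
qed

lemma affine_lin:
  "affine l k (\<lambda>p. t * \<theta> p + (1 - t) * \<phi> p) y i
     = t * affine l k \<theta> y i + (1 - t) * affine l k \<phi> y i"
proof -
  have "(\<Sum>j\<in>{1..l (k - 1)}. weight l k (\<lambda>p. t * \<theta> p + (1 - t) * \<phi> p) i j * y j)
    = t * (\<Sum>j\<in>{1..l (k - 1)}. weight l k \<theta> i j * y j) + (1-t) * (\<Sum>j\<in>{1..l (k - 1)}. weight l k \<phi> i j * y j)"
    unfolding weight_def sum_distrib_left sum.distrib[symmetric]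
    by (rule sum.cong) (auto simp: algebra_simps)
  then show ?thesis unfolding affine_def bias_def by (simp add: algebra_simps)
qed

lemma dir_L1:
  assumes fin: "emeasure \<mu> (space \<mu>) < \<infinity>"
    and int: "\<And>\<theta>. integrable \<mu> (\<lambda>x. \<Sum>i\<in>{1..l 1}. (realization l 1 \<theta> x i - f x i)\<^sup>2)"
    and t: "t \<in> {0..1::real}"
  shows "risk l 1 \<mu> f (\<lambda>i. t * \<theta> i + (1 - t) * \<phi> i)
         \<le> t * risk l 1 \<mu> f \<theta> + (1 - t) * risk l 1 \<mu> f \<phi>"
proof -
  have real1: "realization l 1 \<theta>' x = affine l 1 \<theta>' x" for \<theta>' x by simp
  have "risk l 1 \<mu> f (\<lambda>i. t * \<theta> i + (1 - t) * \<phi> i)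
     \<le> (\<integral>x. t * (\<Sum>i\<in>{1..l 1}. (realization l 1 \<theta> x i - f x i)\<^sup>2)
          + (1 - t) * (\<Sum>i\<in>{1..l 1}. (realization l 1 \<phi> x i - f x i)\<^sup>2) \<partial>\<mu>)"
    unfolding risk_def
  proof (rule integral_mono)
    show "integrable \<mu> (\<lambda>x. \<Sum>i\<in>{1..l 1}. (realization l 1 (\<lambda>i. t * \<theta> i + (1 - t) * \<phi> i) x i - f x i)\<^sup>2)"
      by (rule int)
    show "integrable \<mu> (\<lambda>x. t * (\<Sum>i\<in>{1..l 1}. (realization l 1 \<theta> x i - f x i)\<^sup>2)
          + (1 - t) * (\<Sum>i\<in>{1..l 1}. (realization l 1 \<phi> x i - f x i)\<^sup>2))"
      using int by auto
    fix x
    have "(\<Sum>i\<in>{1..l 1}. (realization l 1 (\<lambda>i. t * \<theta> i + (1 - t) * \<phi> i) x i - f x i)\<^sup>2)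
       \<le> (\<Sum>i\<in>{1..l 1}. t * (realization l 1 \<theta> x i - f x i)\<^sup>2 + (1-t) * (realization l 1 \<phi> x i - f x i)\<^sup>2)"
    proof (rule sum_mono)
      fix i
      show "(realization l 1 (\<lambda>i. t * \<theta> i + (1 - t) * \<phi> i) x i - f x i)\<^sup>2
        \<le> t * (realization l 1 \<theta> x i - f x i)\<^sup>2 + (1-t) * (realization l 1 \<phi> x i - f x i)\<^sup>2"
        unfolding real1 affine_lin using t by (intro sq_convex) auto
    qed
    also have "\<dots> = t * (\<Sum>i\<in>{1..l 1}. (realization l 1 \<theta> x i - f x i)\<^sup>2)
          + (1 - t) * (\<Sum>i\<in>{1..l 1}. (realization l 1 \<phi> x i - f x i)\<^sup>2)"
      by (simp add: sum.distrib sum_distrib_left)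
    finally show "(\<Sum>i\<in>{1..l 1}. (realization l 1 (\<lambda>i. t * \<theta> i + (1 - t) * \<phi> i) x i - f x i)\<^sup>2)
       \<le> t * (\<Sum>i\<in>{1..l 1}. (realization l 1 \<theta> x i - f x i)\<^sup>2)
          + (1 - t) * (\<Sum>i\<in>{1..l 1}. (realization l 1 \<phi> x i - f x i)\<^sup>2)" .
  qed
  also have "\<dots> = t * risk l 1 \<mu> f \<theta> + (1 - t) * risk l 1 \<mu> f \<phi>"
    unfolding risk_def using int by simp
  finally show ?thesis .
qed

lemma risk_zero:
  assumes "emeasure \<mu> (space \<mu>) < \<infinity>" "measure \<mu> (space \<mu>) = 0"
  shows "risk l L \<mu> f \<theta> = 0"
proof -
  have "emeasure \<mu> (space \<mu>) = 0"
    using assms by (simp add: emeasure_eq_ennreal_measure less_top)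
  hence "AE x in \<mu>. P x" for P
    by (intro AE_I[of _ _ "space \<mu>"]) auto
  thus ?thesis unfolding risk_def by (intro integral_eq_zero_AE) auto
qed

definition thp :: "(nat \<Rightarrow> nat) \<Rightarrow> nat \<Rightarrow> real \<Rightarrow> real \<Rightarrow> nat \<Rightarrow> real" where
  "thp l K s \<beta> p = (if p = l K * l (K-1) + 1 + dsum l (K-1) then s
     else if p = dsum l K + 1 then s
     else if p = l (Suc K) * l K + 1 + dsum l K then \<beta> else 0)"

lemma dsum_Suc: "dsum l (Suc K) = dsum l K + l (Suc K) * (l K + 1)"
  by (simp add: dsum_def)

lemma idx_bound:
  fixes i j a b :: nat
  assumes "i \<in> {1..a}" "j \<in> {1..b}"
  shows "(i - 1) * b + j \<le> a * b"
proof -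
  have "(i - 1) * b \<le> (a - 1) * b" using assms by (intro mult_le_mono1) auto
  moreover have "(a - 1) * b + b = a * b" using assms by (cases a) auto
  moreover have "j \<le> b" using assms by auto
  ultimately show ?thesis by linarith
qed

lemma dsumE: "K \<ge> 1 \<Longrightarrow> dsum l K = dsum l (K-1) + l K * l (K-1) + l K"
  by (cases K) (auto simp: dsum_Suc)

lemma prod_pos: fixes l :: "nat \<Rightarrow> nat" assumes "\<And>k. l k \<ge> 1" shows "l a * l b \<ge> 1"
proof -
  have "l a \<ge> 1" "l b \<ge> 1" using assms by auto
  thus ?thesis using mult_le_mono[of 1 "l a" 1 "l b"] by simp
qed

lemma weightK:
  assumes "K \<ge> 1" "\<And>k. l k \<ge> 1" "i \<in> {1..l K}" "j \<in> {1..l (K-1)}"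
  shows "weight l K (thp l K s \<beta>) i j = 0"
proof -
  have "(i - 1) * l (K-1) + j \<le> l K * l (K-1)" using idx_bound assms by blast
  moreover have "l (Suc K) * l K \<ge> 1" using prod_pos assms by blast
  moreover note E = dsumE[OF assms(1), of l]
  ultimately have "(i - 1) * l (K - 1) + j + dsum l (K - 1) \<noteq> l K * l (K-1) + 1 + dsum l (K-1)"
    "(i - 1) * l (K - 1) + j + dsum l (K - 1) \<noteq> dsum l K + 1"
    "(i - 1) * l (K - 1) + j + dsum l (K - 1) \<noteq> l (Suc K) * l K + 1 + dsum l K"
    by linarith+
  thus ?thesis unfolding weight_def thp_def by simp
qed

lemma biasK:
  assumes "K \<ge> 1" "\<And>k. l k \<ge> 1" "i \<in> {1..l K}"
  shows "bias l K (thp l K s \<beta>) i = (if i = 1 then s else 0)"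
proof -
  have "l (Suc K) * l K \<ge> 1" using prod_pos assms by blast
  moreover note E = dsumE[OF assms(1), of l]
  ultimately have "l K * l (K - 1) + i + dsum l (K - 1) = l K * l (K-1) + 1 + dsum l (K-1) \<longleftrightarrow> i = 1"
    "l K * l (K - 1) + i + dsum l (K - 1) \<noteq> dsum l K + 1"
    "l K * l (K - 1) + i + dsum l (K - 1) \<noteq> l (Suc K) * l K + 1 + dsum l K"
    using assms(3) by auto
  thus ?thesis unfolding bias_def thp_def by simp
qed

lemma weightL:
  assumes "K \<ge> 1" "\<And>k. l k \<ge> 1" "i \<in> {1..l (Suc K)}" "j \<in> {1..l K}"
  shows "weight l (Suc K) (thp l K s \<beta>) i j = (if i = 1 \<and> j = 1 then s else 0)"
proof -
  have b: "(i - 1) * l K + j \<le> l (Suc K) * l K" using idx_bound assms by blast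
  have c: "i \<noteq> 1 \<Longrightarrow> (i - 1) * l K \<ge> l K" using assms by auto
  note E = dsumE[OF assms(1), of l]
  have "(i - 1) * l K + j + dsum l K \<noteq> l K * l (K-1) + 1 + dsum l (K-1)"
    using E assms(2)[of K] assms(4) by auto
  moreover have "(i - 1) * l K + j + dsum l K = dsum l K + 1 \<longleftrightarrow> i = 1 \<and> j = 1"
  proof
    assume "(i - 1) * l K + j + dsum l K = dsum l K + 1"
    moreover have "l K \<ge> 1" "j \<ge> 1" using assms by auto
    ultimately show "i = 1 \<and> j = 1"
    proof (cases "i = 1")
      case False
      with c have "l K \<le> (i - 1) * l K" by blast
      with \<open>(i - 1) * l K + j + dsum l K = dsum l K + 1\<close> \<open>l K \<ge> 1\<close> \<open>j \<ge> 1\<close>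
      show ?thesis by linarith
    qed auto
  qed auto
  moreover have "(i - 1) * l K + j + dsum l K \<noteq> l (Suc K) * l K + 1 + dsum l K"
    using b by linarith
  ultimately show ?thesis unfolding weight_def thp_def by simp
qed

lemma biasL:
  assumes "K \<ge> 1" "\<And>k. l k \<ge> 1" "i \<in> {1..l (Suc K)}"
  shows "bias l (Suc K) (thp l K s \<beta>) i = (if i = 1 then \<beta> else 0)"
proof -
  have "l (Suc K) * l K \<ge> 1" using prod_pos assms by blast
  moreover note E = dsumE[OF assms(1), of l]
  moreover have "i \<ge> 1" using assms(3) by auto
  ultimately have "l (Suc K) * l K + i + dsum l K \<noteq> l K * l (K-1) + 1 + dsum l (K-1)"
    "l (Suc K) * l K + i + dsum l K \<noteq> dsum l K + 1"
    "l (Suc K) * l K + i + dsum l K = l (Suc K) * l K + 1 + dsum l K \<longleftrightarrow> i = 1"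
    by linarith+
  thus ?thesis unfolding bias_def thp_def by simp
qed


lemma realK:
  assumes "K \<ge> 1" "\<And>k. l k \<ge> 1" "j \<in> {1..l K}"
  shows "realization l K (thp l K s \<beta>) x j = (if j = 1 then s else 0)"
proof -
  obtain K' where K: "K = Suc K'" using assms by (cases K) auto
  have "realization l K (thp l K s \<beta>) x j
     = bias l K (thp l K s \<beta>) j + (\<Sum>j'\<in>{1..l (K - 1)}. weight l K (thp l K s \<beta>) j j' *
          (if K' = 0 then x else relu (realization l K' (thp l K s \<beta>) x)) j')"
    unfolding K by (simp add: affine_def)
  also have "(\<Sum>j'\<in>{1..l (K - 1)}. weight l K (thp l K s \<beta>) j j' *
          (if K' = 0 then x else relu (realization l K' (thp l K s \<beta>) x)) j') = 0"
    using weightK[where K=K and l=l, OF assms(1,2,3)] by simp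
  finally show ?thesis using biasK[where K=K and l=l, OF assms(1,2,3)] by simp
qed

lemma realL:
  assumes "K \<ge> 1" "\<And>k. l k \<ge> 1" "i \<in> {1..l (Suc K)}"
  shows "realization l (Suc K) (thp l K s \<beta>) x i = (if i = 1 then \<beta> + s * max s 0 else 0)"
proof -
  have K0: "K \<noteq> 0" using assms by auto
  have "realization l (Suc K) (thp l K s \<beta>) x i
     = bias l (Suc K) (thp l K s \<beta>) i + (\<Sum>j\<in>{1..l K}. weight l (Suc K) (thp l K s \<beta>) i j *
          relu (realization l K (thp l K s \<beta>) x) j)"
    using K0 by (simp add: affine_def)
  also have "(\<Sum>j\<in>{1..l K}. weight l (Suc K) (thp l K s \<beta>) i j *
          relu (realization l K (thp l K s \<beta>) x) j)
     = (\<Sum>j\<in>{1..l K}. if j = 1 then (if i = 1 then s * max s 0 else 0) else 0)"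
    by (rule sum.cong) (auto simp: weightL[where K=K and l=l, OF assms(1,2,3)] relu_def realK[where K=K and l=l, OF assms(1,2)])
  also have "\<dots> = (if i = 1 then s * max s 0 else 0)"
    using assms(2)[of K] by (simp add: sum.delta)
  finally show ?thesis using biasL[where K=K and l=l, OF assms(1,2,3)] by simp
qed


lemma dir2:
  fixes l :: "nat \<Rightarrow> nat" and f :: "(nat \<Rightarrow> real) \<Rightarrow> (nat \<Rightarrow> real)"
  assumes K: "K \<ge> 1" and lpos: "\<And>k. l k \<ge> 1"
    and fin: "emeasure \<mu> (space \<mu>) < \<infinity>"
    and int: "\<And>\<theta>. integrable \<mu> (\<lambda>x. \<Sum>i\<in>{1..l (Suc K)}. (realization l (Suc K) \<theta> x i - f x i)\<^sup>2)"
    and m: "measure \<mu> (space \<mu>) > 0"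
    and cvx: "\<forall>\<theta> \<phi> :: nat \<Rightarrow> real. \<forall>t\<in>{0..1::real}.
       risk l (Suc K) \<mu> f (\<lambda>i. t * \<theta> i + (1 - t) * \<phi> i)
         \<le> t * risk l (Suc K) \<mu> f \<theta> + (1 - t) * risk l (Suc K) \<mu> f \<phi>"
  shows False
proof -
  interpret finite_measure \<mu> using fin by (intro finite_measureI) (simp add: less_top)
  define m where "m = measure \<mu> (space \<mu>)"
  define R where "R x = (\<Sum>i\<in>{1..l (Suc K)} - {1}. (f x i)\<^sup>2)" for x
  define F where "F s \<beta> x = (\<Sum>i\<in>{1..l (Suc K)}. (realization l (Suc K) (thp l K s \<beta>) x i - f x i)\<^sup>2)" for s \<beta> x
  have F_eq: "F s \<beta> x = (\<beta> + s * max s 0 - f x 1)\<^sup>2 + R x" for s \<beta> x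
  proof -
    have one: "1 \<in> {1..l (Suc K)}" using lpos[of "Suc K"] by auto
    have "F s \<beta> x = (realization l (Suc K) (thp l K s \<beta>) x 1 - f x 1)\<^sup>2
       + (\<Sum>i\<in>{1..l (Suc K)} - {1}. (realization l (Suc K) (thp l K s \<beta>) x i - f x i)\<^sup>2)"
      unfolding F_def by (rule sum.remove[OF _ one]) simp
    also have "(\<Sum>i\<in>{1..l (Suc K)} - {1}. (realization l (Suc K) (thp l K s \<beta>) x i - f x i)\<^sup>2) = R x"
      unfolding R_def
    proof (rule sum.cong)
      fix i assume i: "i \<in> {1..l (Suc K)} - {1}"
      show "(realization l (Suc K) (thp l K s \<beta>) x i - f x i)\<^sup>2 = (f x i)\<^sup>2"
        using i by (subst realL[where K=K and l=l, OF K lpos]) auto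
    qed simp
    finally show ?thesis by (subst (asm) realL[where K=K and l=l, OF K lpos one]) simp
  qed
  have intF: "integrable \<mu> (F s \<beta>)" for s \<beta> unfolding F_def using int by blast
  have riskF: "risk l (Suc K) \<mu> f (thp l K s \<beta>) = integral\<^sup>L \<mu> (F s \<beta>)" for s \<beta>
    unfolding risk_def F_def ..
  define G where "G x = F 0 0 x - F 1 0 x" for x
  have intG: "integrable \<mu> G" unfolding G_def using intF by auto
  define \<beta> where "\<beta> = (integral\<^sup>L \<mu> G - m) / (2 * m)"
  have diff: "F 0 \<beta> x - F 1 \<beta> x = G x - 2 * \<beta>" for x
    unfolding G_def F_eq by (simp add: power2_eq_square algebra_simps)
  have "integral\<^sup>L \<mu> (F 0 \<beta>) - integral\<^sup>L \<mu> (F 1 \<beta>) = integral\<^sup>L \<mu> (\<lambda>x. F 0 \<beta> x - F 1 \<beta> x)"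
    using intF by (simp add: integral_diff)
  also have "\<dots> = integral\<^sup>L \<mu> (\<lambda>x. G x - 2 * \<beta>)" unfolding diff ..
  also have "\<dots> = integral\<^sup>L \<mu> G - m * (2 * \<beta>)"
    using intG by (simp add: integral_diff m_def)
  also have "\<dots> = m" unfolding \<beta>_def using m m_def by (simp add: field_simps)
  finally have gap: "integral\<^sup>L \<mu> (F 0 \<beta>) - integral\<^sup>L \<mu> (F 1 \<beta>) = m" .
  have mix: "(\<lambda>i. (1/2) * thp l K 1 \<beta> i + (1 - 1/2) * thp l K (-1) \<beta> i) = thp l K 0 \<beta>"
    by (auto simp: thp_def)
  have "risk l (Suc K) \<mu> f (thp l K 0 \<beta>)
     \<le> (1/2) * risk l (Suc K) \<mu> f (thp l K 1 \<beta>) + (1 - 1/2) * risk l (Suc K) \<mu> f (thp l K (-1) \<beta>)"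
    using cvx[rule_format, of "1/2" "thp l K 1 \<beta>" "thp l K (-1) \<beta>"] unfolding mix by simp
  moreover have "F (-1) \<beta> = F 0 \<beta>" by (auto simp: F_eq)
  ultimately have "integral\<^sup>L \<mu> (F 0 \<beta>) \<le> integral\<^sup>L \<mu> (F 1 \<beta>)" unfolding riskF by simp
  with gap m show False unfolding m_def by linarith
qed


theorem corollary2p19:
  fixes L :: nat and l :: "nat \<Rightarrow> nat" and a b :: real
    and \<mu> :: "(nat \<Rightarrow> real) measure" and f :: "(nat \<Rightarrow> real) \<Rightarrow> (nat \<Rightarrow> real)"
  assumes "L \<ge> 1"
    and "\<And>k. l k \<ge> 1"
    and "a < b"
    and "sets \<mu> = sets (Pi\<^sub>M {1..l 0} (\<lambda>_. restrict_space borel {a..b}))"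
    and "emeasure \<mu> (space \<mu>) < \<infinity>"
    and "\<And>i. i \<in> {1..l L} \<Longrightarrow> (\<lambda>x. f x i) \<in> borel_measurable \<mu>"
    and "\<And>\<theta>. integrable \<mu> (\<lambda>x. \<Sum>i\<in>{1..l L}. (realization l L \<theta> x i - f x i)\<^sup>2)"
  shows "(real L - 1) * measure \<mu> (space \<mu>) = 0 \<longleftrightarrow>
    (\<forall>\<theta> \<phi> :: nat \<Rightarrow> real. \<forall>t\<in>{0..1::real}.
       risk l L \<mu> f (\<lambda>i. t * \<theta> i + (1 - t) * \<phi> i)
         \<le> t * risk l L \<mu> f \<theta> + (1 - t) * risk l L \<mu> f \<phi>)"
proof
  assume h: "(real L - 1) * measure \<mu> (space \<mu>) = 0"
  show "\<forall>\<theta> \<phi> :: nat \<Rightarrow> real. \<forall>t\<in>{0..1::real}.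
       risk l L \<mu> f (\<lambda>i. t * \<theta> i + (1 - t) * \<phi> i)
         \<le> t * risk l L \<mu> f \<theta> + (1 - t) * risk l L \<mu> f \<phi>"
  proof (cases "L = 1")
    case True
    show ?thesis unfolding True
      using dir_L1[OF assms(5)] assms(7) unfolding True by blast
  next
    case False
    with h have "measure \<mu> (space \<mu>) = 0" by simp
    thus ?thesis using risk_zero[OF assms(5)] by simp
  qed
next
  assume cvx: "\<forall>\<theta> \<phi> :: nat \<Rightarrow> real. \<forall>t\<in>{0..1::real}.
       risk l L \<mu> f (\<lambda>i. t * \<theta> i + (1 - t) * \<phi> i)
         \<le> t * risk l L \<mu> f \<theta> + (1 - t) * risk l L \<mu> f \<phi>"
  show "(real L - 1) * measure \<mu> (space \<mu>) = 0"
  proof (rule ccontr)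
    assume "(real L - 1) * measure \<mu> (space \<mu>) \<noteq> 0"
    hence L1: "L \<noteq> 1" and m0: "measure \<mu> (space \<mu>) \<noteq> 0" by auto
    have mpos: "measure \<mu> (space \<mu>) > 0" using m0 measure_nonneg[of \<mu> "space \<mu>"] by linarith
    obtain K where K: "L = Suc K" "K \<ge> 1" using assms(1) L1 by (cases L) auto
    show False
      using dir2[of K l \<mu> f, OF K(2) assms(2) assms(5) _ mpos] assms(7) cvx unfolding K(1) by blast
  qed
qed

end
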